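(* Let $\star$ be a state over time function satisfying axiom (E). Then $\star$ satisfies axiom (P) if and only if for all systems $A,B$, every $\mathcal{E}_{B|A}\in\mathfrak{C}(A,B)$ and every $\rho_A\in\mathfrak{S}(A)$, $$\mathcal{E}_{B|A}\star\rho_A=(\mathrm{id}_A\otimes\mathcal{E}_{B|A'})(\mathrm{id}_{A'|A}\star\rho_A).$$ Moreover, in this case $\star$ is process-linear, and $\star$ can be linearly extended to arbitrary linear maps $\mathcal{E}_{B|A}:\mathfrak{B}(A)\to\mathfrak{B}(B)$ (not necessarily channels) through this formula.
   Context: Systems are finite-dimensional Hilbert spaces; $\mathfrak{B}(A)$ linear operators, $\mathfrak{S}(A)$ density operators, $\mathfrak{C}(A,B)$ quantum channels (CPTP maps $\mathfrak{B}(A)\to\mathfrak{B}(B)$). $A'$ is a copy of $A$ (isomorphic systems identified), $\mathrm{id}_{A'|A}$ the identity channel, and $\mathcal{E}_{B|A'}$ is the map $\mathcal{E}_{B|A}$ acting on the copy $A'$. A state over time function assigns to all systems $A,B$ a map $\star:\mathfrak{C}(A,B)\times\mathfrak{S}(A)\to\mathfrak{B}(A\otimes B)$, $(\mathcal{E},\rho)\mapsto\mathcal{E}_{B|A}\star\rho_A$, with $\mathrm{Tr}_A[\mathcal{E}\star\rho]=\mathcal{E}(\rho)$ and $\mathrm{Tr}_B[\mathcal{E}\star\rho]=\rho$, extended homogeneously by $(\lambda\mathcal{E})\star\rho=\mathcal{E}\star(\lambda\rho)=\lambda(\mathcal{E}\star\rho)$, $\lambda\in\mathbb{C}$. It is process-linear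 if linear in the first argument. A quantum state over spacetime on $A\otimes E$ is either a density operator on $A\otimes E$ or an operator of the form $\mathcal{F}\star\sigma$. Axiom (E): for all systems $A,B,E$, every quantum state over spacetime $\rho_{AE}$ and every channel $\mathcal{E}_{B|A}$, an operator $\mathcal{E}_{B|A}\star\rho_{AE}$ on $A\otimes B\otimes E$ is defined such that for every completely positive trace-non-increasing map $\mathcal{I}_E$ on $E$, $\mathcal{I}_E[\mathcal{E}\star\rho_{AE}]=\mathcal{E}\star\mathcal{I}_E(\rho_{AE})$, and $\mathrm{Tr}_A[\mathcal{E}\star\rho_{AE}]=(\mathcal{E}\otimes\mathrm{id}_E)(\rho_{AE})$. Axiom (P): for all channels $\mathcal{E}_{B|A}$, $\mathcal{F}_{C|B}$ and states $\rho_A$, $\mathrm{Tr}_B[\mathcal{F}_{C|B}\star(\mathcal{E}_{B|A}\star\rho_A)]=(\mathcal{F}\circ\mathcal{E})_{C|A}\star\rho_A$, where $\mathcal{F}_{C|B}\star(\cdot)$ acts on the $B$-part of the state over spacetime on $A\otimes B$ with $A$ as spectator system as in axiom (E). *)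

theory Defs
  imports "Jordan_Normal_Form.Matrix"
begin

text \<open>Systems are identified with their (finite) dimension n; operators on a system of
dimension n are complex n x n matrices (basis-dependent representation of B(C^n)).
The tensor product C^a (x) C^b is identified with C^(a*b) via the index map (i,j) |-> i*b + j.
Linear maps B(A) -> B(B) are HOL functions on matrices, only their behaviour on
carrier_mat a a matters.\<close>

type_synonym cmat = "complex mat"
type_synonym qmap = "complex mat \<Rightarrow> complex mat"

definition trace :: "cmat \<Rightarrow> complex" where
  "trace A = (\<Sum>i<dim_row A. A $$ (i, i))"

definition psd :: "nat \<Rightarrow> cmat \<Rightarrow> bool" where
  "psd n A \<longleftrightarrow> A \<in> carrier_mat n n \<and>
     (\<forall>v :: nat \<Rightarrow> complex.
        Im (\<Sum>i<n. \<Sum>j<n. cnj (v i) * A $$ (i, j) * v j) = 0 \<and>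
        Re (\<Sum>i<n. \<Sum>j<n. cnj (v i) * A $$ (i, j) * v j) \<ge> 0)"

definition density :: "nat \<Rightarrow> cmat \<Rightarrow> bool" where
  "density n \<rho> \<longleftrightarrow> psd n \<rho> \<and> trace \<rho> = 1"

definition ptrace_left :: "nat \<Rightarrow> nat \<Rightarrow> cmat \<Rightarrow> cmat" where
  "ptrace_left a b M = mat b b (\<lambda>(i, j). \<Sum>k<a. M $$ (k * b + i, k * b + j))"

definition ptrace_right :: "nat \<Rightarrow> nat \<Rightarrow> cmat \<Rightarrow> cmat" where
  "ptrace_right a b M = mat a a (\<lambda>(i, j). \<Sum>k<b. M $$ (i * b + k, j * b + k))"

definition swap_sys :: "nat \<Rightarrow> nat \<Rightarrow> cmat \<Rightarrow> cmat" where
  "swap_sys a b M = mat (b * a) (b * a)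
     (\<lambda>(i, j). M $$ ((i mod a) * b + i div a, (j mod a) * b + j div a))"

text \<open>(F (x) id_E) applied to M on In (x) E, F : B(In) -> B(Out); result on Out (x) E.
 Defined block-wise, which is the (unique) linear extension for linear F.\<close>
definition apply_left :: "nat \<Rightarrow> nat \<Rightarrow> nat \<Rightarrow> qmap \<Rightarrow> cmat \<Rightarrow> cmat" where
  "apply_left din dout e F M = mat (dout * e) (dout * e)
     (\<lambda>(p, q). F (mat din din (\<lambda>(i, j). M $$ (i * e + p mod e, j * e + q mod e)))
                  $$ (p div e, q div e))"

text \<open>(id_E (x) F) applied to M on E (x) In; result on E (x) Out.\<close>
definition apply_right :: "nat \<Rightarrow> nat \<Rightarrow> nat \<Rightarrow> qmap \<Rightarrow> cmat \<Rightarrow> cmat" where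
  "apply_right e din dout F M = mat (e * dout) (e * dout)
     (\<lambda>(p, q). F (mat din din (\<lambda>(i, j). M $$ ((p div dout) * din + i, (q div dout) * din + j)))
                  $$ (p mod dout, q mod dout))"

definition linear_qmap :: "nat \<Rightarrow> nat \<Rightarrow> qmap \<Rightarrow> bool" where
  "linear_qmap din dout F \<longleftrightarrow>
     (\<forall>M \<in> carrier_mat din din. F M \<in> carrier_mat dout dout) \<and>
     (\<forall>M \<in> carrier_mat din din. \<forall>N \<in> carrier_mat din din. F (M + N) = F M + F N) \<and>
     (\<forall>M \<in> carrier_mat din din. \<forall>c. F (c \<cdot>\<^sub>m M) = c \<cdot>\<^sub>m F M)"

definition completely_positive :: "nat \<Rightarrow> nat \<Rightarrow> qmap \<Rightarrow> bool" where
  "completely_positive din dout F \<longleftrightarrow>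
     (\<forall>k M. psd (din * k) M \<longrightarrow> psd (dout * k) (apply_left din dout k F M))"

definition channel :: "nat \<Rightarrow> nat \<Rightarrow> qmap \<Rightarrow> bool" where
  "channel din dout F \<longleftrightarrow> linear_qmap din dout F \<and> completely_positive din dout F \<and>
     (\<forall>M \<in> carrier_mat din din. trace (F M) = trace M)"

definition cp_trace_nonincreasing :: "nat \<Rightarrow> nat \<Rightarrow> qmap \<Rightarrow> bool" where
  "cp_trace_nonincreasing din dout F \<longleftrightarrow> linear_qmap din dout F \<and> completely_positive din dout F \<and>
     (\<forall>M. psd din M \<longrightarrow> Re (trace (F M)) \<le> Re (trace M))"

text \<open>A state over time function: star a b F \<rho> is F_{B|A} \<star> \<rho>_A on A (x) B.
 The homogeneous extension to scalar multiples is part of the definition.\<close>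
definition state_over_time :: "(nat \<Rightarrow> nat \<Rightarrow> qmap \<Rightarrow> cmat \<Rightarrow> cmat) \<Rightarrow> bool" where
  "state_over_time star \<longleftrightarrow>
     (\<forall>a b F \<rho>. channel a b F \<and> density a \<rho> \<longrightarrow>
        star a b F \<rho> \<in> carrier_mat (a * b) (a * b) \<and>
        ptrace_left a b (star a b F \<rho>) = F \<rho> \<and>
        ptrace_right a b (star a b F \<rho>) = \<rho> \<and>
        (\<forall>c. star a b (\<lambda>M. c \<cdot>\<^sub>m F M) \<rho> = c \<cdot>\<^sub>m star a b F \<rho> \<and>
             star a b F (c \<cdot>\<^sub>m \<rho>) = c \<cdot>\<^sub>m star a b F \<rho>))"

definition matsum :: "nat \<Rightarrow> nat \<Rightarrow> (nat \<Rightarrow> cmat) \<Rightarrow> cmat" where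
  "matsum n k f = foldr (\<lambda>i acc. f i + acc) [0..<k] (0\<^sub>m n n)"

text \<open>Process-linearity: linearity in the first argument on the (homogeneously extended)
 domain of scalar multiples of channels: whenever mu E = sum_i lambda_i E_i (as maps on B(A)),
 then mu (E \<star> \<rho>) = sum_i lambda_i (E_i \<star> \<rho>).\<close>
definition process_linear :: "(nat \<Rightarrow> nat \<Rightarrow> qmap \<Rightarrow> cmat \<Rightarrow> cmat) \<Rightarrow> bool" where
  "process_linear star \<longleftrightarrow>
     (\<forall>a b \<rho> k (lam :: nat \<Rightarrow> complex) Fs \<mu> E.
        density a \<rho> \<and> channel a b E \<and> (\<forall>i<k. channel a b (Fs i)) \<and>
        (\<forall>M \<in> carrier_mat a a. \<mu> \<cdot>\<^sub>m E M = matsum b k (\<lambda>i. lam i \<cdot>\<^sub>m Fs i M)) \<longrightarrow>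
        \<mu> \<cdot>\<^sub>m star a b E \<rho> = matsum (a * b) k (\<lambda>i. lam i \<cdot>\<^sub>m star a b (Fs i) \<rho>))"

text \<open>Quantum states over spacetime on A (x) E: density operators, or operators G \<star> \<sigma>
 with G : X -> Y and X (x) Y being A (x) E (in either order of the two factors).\<close>
definition state_over_spacetime ::
  "(nat \<Rightarrow> nat \<Rightarrow> qmap \<Rightarrow> cmat \<Rightarrow> cmat) \<Rightarrow> nat \<Rightarrow> nat \<Rightarrow> cmat \<Rightarrow> bool" where
  "state_over_spacetime star a e M \<longleftrightarrow>
     density (a * e) M \<or>
     (\<exists>G \<sigma>. channel a e G \<and> density a \<sigma> \<and> M = star a e G \<sigma>) \<or>
     (\<exists>G \<sigma>. channel e a G \<and> density e \<sigma> \<and> M = swap_sys e a (star e a G \<sigma>))"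

text \<open>Axiom (E) for star with extension ext: ext a b e F \<rho>_AE is F_{B|A} \<star> \<rho>_{AE}
 on A (x) B (x) E.  The extension agrees with star for the trivial environment (dim 1,
 A (x) C identified with A) and is homogeneous in both arguments.\<close>
definition axiomE ::
  "(nat \<Rightarrow> nat \<Rightarrow> qmap \<Rightarrow> cmat \<Rightarrow> cmat) \<Rightarrow> (nat \<Rightarrow> nat \<Rightarrow> nat \<Rightarrow> qmap \<Rightarrow> cmat \<Rightarrow> cmat) \<Rightarrow> bool" where
  "axiomE star ext \<longleftrightarrow>
     (\<forall>a b F \<rho>. channel a b F \<and> density a \<rho> \<longrightarrow> ext a b 1 F \<rho> = star a b F \<rho>) \<and>
     (\<forall>a b e F \<rho>. channel a b F \<and> state_over_spacetime star a e \<rho> \<longrightarrow>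
        ext a b e F \<rho> \<in> carrier_mat (a * b * e) (a * b * e) \<and>
        (\<forall>I. cp_trace_nonincreasing e e I \<longrightarrow>
            apply_right (a * b) e e I (ext a b e F \<rho>) = ext a b e F (apply_right a e e I \<rho>)) \<and>
        ptrace_left a (b * e) (ext a b e F \<rho>) = apply_left a b e F \<rho> \<and>
        (\<forall>c. ext a b e (\<lambda>M. c \<cdot>\<^sub>m F M) \<rho> = c \<cdot>\<^sub>m ext a b e F \<rho> \<and>
             ext a b e F (c \<cdot>\<^sub>m \<rho>) = c \<cdot>\<^sub>m ext a b e F \<rho>))"

text \<open>Axiom (P): Tr_B[F_{C|B} \<star> (E_{B|A} \<star> \<rho>_A)] = (F o E) \<star> \<rho>_A, where F acts on the
 B-part of E \<star> \<rho> (reordered to B (x) A) with spectator A; the result on C (x) A is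
 identified with A (x) C.\<close>
definition axiomP ::
  "(nat \<Rightarrow> nat \<Rightarrow> qmap \<Rightarrow> cmat \<Rightarrow> cmat) \<Rightarrow> (nat \<Rightarrow> nat \<Rightarrow> nat \<Rightarrow> qmap \<Rightarrow> cmat \<Rightarrow> cmat) \<Rightarrow> bool" where
  "axiomP star ext \<longleftrightarrow>
     (\<forall>a b c E F \<rho>. channel a b E \<and> channel b c F \<and> density a \<rho> \<longrightarrow>
        swap_sys c a (ptrace_left b (c * a) (ext b c a F (swap_sys a b (star a b E \<rho>))))
          = star a c (F \<circ> E) \<rho>)"

end

theory Submission
  imports Defs
begin

lemma idx1:
  fixes i b a :: nat assumes "i < a * b"
  shows "((i mod b) * a + i div b) mod a = i div b" "((i mod b) * a + i div b) div a = i mod b"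
    "(i mod b) * a + i div b < b * a" "i div b < a" "i mod b < b"
proof -
  have b0: "b > 0" using assms by (cases b) auto
  show d: "i div b < a" using assms by (simp add: less_mult_imp_div_less)
  show "((i mod b) * a + i div b) mod a = i div b" using d by simp
  show "((i mod b) * a + i div b) div a = i mod b" using d by simp
  show "i mod b < b" using b0 by simp
  then have "Suc (i mod b) \<le> b" by simp
  then have "Suc (i mod b) * a \<le> b * a" by (rule mult_le_mono1)
  then show "(i mod b) * a + i div b < b * a" using d by simp
qed

lemma idx2: fixes x y n m :: nat assumes "x < n" "y < m" shows "x * m + y < n * m"
proof -
  have "Suc x * m \<le> n * m" using assms(1) by (intro mult_le_mono1) simp
  then show ?thesis using assms(2) by simp
qed

lemma swap_left_right:
  "swap_sys b a (apply_left a b a E (swap_sys a a S)) = apply_right a a b E S"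
proof (rule eq_matI)
  show "dim_row (swap_sys b a (apply_left a b a E (swap_sys a a S))) = dim_row (apply_right a a b E S)"
    by (simp add: swap_sys_def apply_right_def mult.commute)
  show "dim_col (swap_sys b a (apply_left a b a E (swap_sys a a S))) = dim_col (apply_right a a b E S)"
    by (simp add: swap_sys_def apply_right_def mult.commute)
  fix i j assume i: "i < dim_row (apply_right a a b E S)" and j: "j < dim_col (apply_right a a b E S)"
  then have i': "i < a * b" and j': "j < a * b" by (auto simp: apply_right_def)
  note I = idx1[OF i'] and J = idx1[OF j']
  have blk: "mat a a (\<lambda>(ia, ja). mat (a * a) (a * a)
                 (\<lambda>(i, j). S $$ (i mod a * a + i div a, j mod a * a + j div a)) $$ (ia * a + i div b, ja * a + j div b))
     = mat a a (\<lambda>(k, l). S $$ (i div b * a + k, j div b * a + l))"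
    by (rule eq_matI) (auto simp: I(4) J(4) idx2)
  show "swap_sys b a (apply_left a b a E (swap_sys a a S)) $$ (i, j) = apply_right a a b E S $$ (i, j)"
    using i' j' I J by (simp add: swap_sys_def apply_left_def apply_right_def blk)
qed


lemma blk_swap_right:
  assumes E: "\<forall>M\<in>carrier_mat a a. E M \<in> carrier_mat b b" and x: "x < a" and y: "y < a"
  shows "mat b b (\<lambda>(i', j'). swap_sys a b (apply_right a a b E S) $$ (i' * a + x, j' * a + y))
     = E (mat a a (\<lambda>(k, l). S $$ (x * a + k, y * a + l)))"
proof -
  have C: "E (mat a a (\<lambda>(k, l). S $$ (x * a + k, y * a + l))) \<in> carrier_mat b b" using E by auto
  show ?thesis
  proof (rule eq_matI)
    fix i j assume i: "i < dim_row (E (mat a a (\<lambda>(k, l). S $$ (x * a + k, y * a + l))))"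
      and j: "j < dim_col (E (mat a a (\<lambda>(k, l). S $$ (x * a + k, y * a + l))))"
    then have ib: "i < b" and jb: "j < b" using C by auto
    have "i * a + x < b * a" "j * a + y < b * a" using ib jb x y by (auto intro: idx2)
    moreover have "x * b + i < a * b" "y * b + j < a * b" using ib jb x y by (auto intro: idx2)
    ultimately show "mat b b (\<lambda>(i', j'). swap_sys a b (apply_right a a b E S) $$ (i' * a + x, j' * a + y)) $$ (i, j) =
         E (mat a a (\<lambda>(k, l). S $$ (x * a + k, y * a + l))) $$ (i, j)"
      using ib jb x y by (simp add: swap_sys_def apply_right_def)
  qed (use C in auto)
qed

lemma swap_comp:
  assumes E: "\<forall>M\<in>carrier_mat a a. E M \<in> carrier_mat b b"
  shows "swap_sys c a (apply_left b c a F (swap_sys a b (apply_right a a b E S))) = apply_right a a c (F \<circ> E) S"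
proof (rule eq_matI)
  show "dim_row (swap_sys c a (apply_left b c a F (swap_sys a b (apply_right a a b E S)))) = dim_row (apply_right a a c (F \<circ> E) S)"
    by (simp add: swap_sys_def apply_right_def mult.commute)
  show "dim_col (swap_sys c a (apply_left b c a F (swap_sys a b (apply_right a a b E S)))) = dim_col (apply_right a a c (F \<circ> E) S)"
    by (simp add: swap_sys_def apply_right_def mult.commute)
  fix i j assume i: "i < dim_row (apply_right a a c (F \<circ> E) S)" and j: "j < dim_col (apply_right a a c (F \<circ> E) S)"
  then have i': "i < a * c" and j': "j < a * c" by (auto simp: apply_right_def)
  note I = idx1[OF i'] and J = idx1[OF j']
  have "swap_sys c a (apply_left b c a F (swap_sys a b (apply_right a a b E S))) $$ (i, j)
     = apply_left b c a F (swap_sys a b (apply_right a a b E S)) $$ (i mod c * a + i div c, j mod c * a + j div c)"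
    using i' j' by (simp add: swap_sys_def[of c a])
  also have "\<dots> = F (mat b b (\<lambda>(i', j'). swap_sys a b (apply_right a a b E S) $$ (i' * a + i div c, j' * a + j div c))) $$ (i mod c, j mod c)"
    using I J by (simp add: apply_left_def)
  also have "\<dots> = F (E (mat a a (\<lambda>(k, l). S $$ (i div c * a + k, j div c * a + l)))) $$ (i mod c, j mod c)"
    by (simp only: blk_swap_right[OF E I(4) J(4)])
  also have "\<dots> = apply_right a a c (F \<circ> E) S $$ (i, j)"
    using i' j' by (simp add: apply_right_def)
  finally show "swap_sys c a (apply_left b c a F (swap_sys a b (apply_right a a b E S))) $$ (i, j) = apply_right a a c (F \<circ> E) S $$ (i, j)" .
qed


lemma apply_left_id:
  assumes "M \<in> carrier_mat (a * k) (a * k)"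
  shows "apply_left a a k id M = M"
proof (rule eq_matI)
  fix i j assume "i < dim_row M" "j < dim_col M"
  then have i: "i < a * k" and j: "j < a * k" using assms by auto
  have "i div k < a" "j div k < a" using i j by (auto simp: less_mult_imp_div_less)
  then show "apply_left a a k id M $$ (i, j) = M $$ (i, j)"
    using i j by (simp add: apply_left_def)
qed (use assms in \<open>auto simp: apply_left_def\<close>)

lemma channel_id: "channel a a id"
proof -
  have "linear_qmap a a id" by (simp add: linear_qmap_def)
  moreover have "completely_positive a a id"
    unfolding completely_positive_def
  proof (intro allI impI)
    fix k M assume "psd (a * k) M"
    moreover then have "M \<in> carrier_mat (a * k) (a * k)" by (simp add: psd_def)
    ultimately show "psd (a * k) (apply_left a a k id M)" by (simp add: apply_left_id)
  qed
  ultimately show ?thesis by (simp add: channel_def)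
qed

lemma apply_left_comp:
  assumes E: "\<forall>M\<in>carrier_mat a a. E M \<in> carrier_mat b b"
  shows "apply_left a c k (F \<circ> E) M = apply_left b c k F (apply_left a b k E M)"
proof (rule eq_matI)
  show "dim_row (apply_left a c k (F \<circ> E) M) = dim_row (apply_left b c k F (apply_left a b k E M))"
    by (simp add: apply_left_def)
  show "dim_col (apply_left a c k (F \<circ> E) M) = dim_col (apply_left b c k F (apply_left a b k E M))"
    by (simp add: apply_left_def)
  fix p q assume "p < dim_row (apply_left b c k F (apply_left a b k E M))"
    "q < dim_col (apply_left b c k F (apply_left a b k E M))"
  then have p: "p < c * k" and q: "q < c * k" by (auto simp: apply_left_def)
  then have k0: "k > 0" by (cases k) auto
  define X where "X = mat a a (\<lambda>(i, j). M $$ (i * k + p mod k, j * k + q mod k))"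
  have XC: "E X \<in> carrier_mat b b" using E by (simp add: X_def)
  have "mat b b (\<lambda>(i, j). apply_left a b k E M $$ (i * k + p mod k, j * k + q mod k)) = E X"
  proof (rule eq_matI)
    fix i j assume "i < dim_row (E X)" "j < dim_col (E X)"
    then have i: "i < b" and j: "j < b" using XC by auto
    have "i * k + p mod k < b * k" "j * k + q mod k < b * k" using i j k0 by (auto intro!: idx2)
    then show "mat b b (\<lambda>(i, j). apply_left a b k E M $$ (i * k + p mod k, j * k + q mod k)) $$ (i, j) = E X $$ (i, j)"
      using i j k0 by (simp add: apply_left_def X_def)
  qed (use XC in auto)
  then show "apply_left a c k (F \<circ> E) M $$ (p, q) = apply_left b c k F (apply_left a b k E M) $$ (p, q)"
    using p q by (simp add: apply_left_def X_def)
qed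

lemma channel_comp:
  assumes "channel a b E" "channel b c F"
  shows "channel a c (F \<circ> E)"
proof -
  have lE: "linear_qmap a b E" and lF: "linear_qmap b c F" using assms by (auto simp: channel_def)
  have EC: "\<forall>M\<in>carrier_mat a a. E M \<in> carrier_mat b b" using lE by (simp add: linear_qmap_def)
  have "linear_qmap a c (F \<circ> E)"
    using lE lF unfolding linear_qmap_def by auto
  moreover have "completely_positive a c (F \<circ> E)"
    using assms unfolding channel_def completely_positive_def
    by (simp add: apply_left_comp[OF EC])
  moreover have "\<forall>M\<in>carrier_mat a a. trace ((F \<circ> E) M) = trace M"
    using assms EC unfolding channel_def by auto
  ultimately show ?thesis by (simp add: channel_def)
qed

lemma foldr_entry:
  fixes f :: "nat \<Rightarrow> cmat" and A :: cmat
  assumes "\<forall>i\<in>set xs. f i \<in> carrier_mat n n" "A \<in> carrier_mat n n" "p < n" "q < n"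
  shows "foldr (\<lambda>i acc. f i + acc) xs A \<in> carrier_mat n n \<and>
         foldr (\<lambda>i acc. f i + acc) xs A $$ (p, q) = (\<Sum>i\<leftarrow>xs. f i $$ (p, q)) + A $$ (p, q)"
  using assms by (induction xs) (auto simp: add.assoc)

lemma matsum_entry:
  assumes "\<forall>i<k. f i \<in> carrier_mat n n" "p < n" "q < n"
  shows "matsum n k f $$ (p, q) = (\<Sum>i<k. f i $$ (p, q))"
proof -
  have "matsum n k f $$ (p, q) = (\<Sum>i\<leftarrow>[0..<k]. f i $$ (p, q)) + 0\<^sub>m n n $$ (p, q)"
    unfolding matsum_def using foldr_entry[of "[0..<k]" f n "0\<^sub>m n n" p q] assms by auto
  also have "\<dots> = (\<Sum>i<k. f i $$ (p, q))"
    using assms by (simp add: interv_sum_list_conv_sum_set_nat lessThan_atLeast0)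
  finally show ?thesis .
qed

lemma matsum_carrier:
  assumes "\<forall>i<k. f i \<in> carrier_mat n n"
  shows "matsum n k f \<in> carrier_mat n n"
proof -
  have "foldr (\<lambda>i acc. f i + acc) xs (0\<^sub>m n n) \<in> carrier_mat n n" if "\<forall>i\<in>set xs. f i \<in> carrier_mat n n" for xs
    using that by (induction xs) auto
  then show ?thesis using assms unfolding matsum_def by auto
qed


lemma apply_right_carrier: "apply_right e a b F S \<in> carrier_mat (e * b) (e * b)"
  by (simp add: apply_right_def)

lemma apply_right_lin:
  assumes F: "\<forall>M\<in>carrier_mat a a. F M \<in> carrier_mat b b" and G: "\<forall>M\<in>carrier_mat a a. G M \<in> carrier_mat b b"
  shows "apply_right e a b (\<lambda>M. \<alpha> \<cdot>\<^sub>m F M + \<beta> \<cdot>\<^sub>m G M) S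
       = \<alpha> \<cdot>\<^sub>m apply_right e a b F S + \<beta> \<cdot>\<^sub>m apply_right e a b G S"
proof (rule eq_matI)
  fix p q assume "p < dim_row (\<alpha> \<cdot>\<^sub>m apply_right e a b F S + \<beta> \<cdot>\<^sub>m apply_right e a b G S)"
    "q < dim_col (\<alpha> \<cdot>\<^sub>m apply_right e a b F S + \<beta> \<cdot>\<^sub>m apply_right e a b G S)"
  then have p: "p < e * b" and q: "q < e * b" by (auto simp: apply_right_def)
  note P = idx1[OF p] and Q = idx1[OF q]
  define X where "X = mat a a (\<lambda>(i, j). S $$ (p div b * a + i, q div b * a + j))"
  have "F X \<in> carrier_mat b b" "G X \<in> carrier_mat b b" using F G by (auto simp: X_def)
  then show "apply_right e a b (\<lambda>M. \<alpha> \<cdot>\<^sub>m F M + \<beta> \<cdot>\<^sub>m G M) S $$ (p, q) =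
         (\<alpha> \<cdot>\<^sub>m apply_right e a b F S + \<beta> \<cdot>\<^sub>m apply_right e a b G S) $$ (p, q)"
    using p q P(5) Q(5) by (simp add: apply_right_def X_def[symmetric])
qed (auto simp: apply_right_def)

lemma apply_right_sum:
  assumes E: "\<forall>M\<in>carrier_mat a a. E M \<in> carrier_mat b b"
    and Fs: "\<forall>i<k. \<forall>M\<in>carrier_mat a a. Fs i M \<in> carrier_mat b b"
    and eq: "\<forall>M\<in>carrier_mat a a. \<mu> \<cdot>\<^sub>m E M = matsum b k (\<lambda>i. lam i \<cdot>\<^sub>m Fs i M)"
  shows "\<mu> \<cdot>\<^sub>m apply_right e a b E S = matsum (e * b) k (\<lambda>i. lam i \<cdot>\<^sub>m apply_right e a b (Fs i) S)"
proof (rule eq_matI)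
  have C: "matsum (e * b) k (\<lambda>i. lam i \<cdot>\<^sub>m apply_right e a b (Fs i) S) \<in> carrier_mat (e * b) (e * b)"
    by (rule matsum_carrier) (simp add: apply_right_def)
  then show "dim_row (\<mu> \<cdot>\<^sub>m apply_right e a b E S) = dim_row (matsum (e * b) k (\<lambda>i. lam i \<cdot>\<^sub>m apply_right e a b (Fs i) S))"
    "dim_col (\<mu> \<cdot>\<^sub>m apply_right e a b E S) = dim_col (matsum (e * b) k (\<lambda>i. lam i \<cdot>\<^sub>m apply_right e a b (Fs i) S))"
    by (auto simp: apply_right_def)
  fix p q assume "p < dim_row (matsum (e * b) k (\<lambda>i. lam i \<cdot>\<^sub>m apply_right e a b (Fs i) S))"
    "q < dim_col (matsum (e * b) k (\<lambda>i. lam i \<cdot>\<^sub>m apply_right e a b (Fs i) S))"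
  then have p: "p < e * b" and q: "q < e * b" using C by auto
  note P = idx1[OF p] and Q = idx1[OF q]
  define X where "X = mat a a (\<lambda>(i, j). S $$ (p div b * a + i, q div b * a + j))"
  have XC: "X \<in> carrier_mat a a" by (simp add: X_def)
  have EX: "E X \<in> carrier_mat b b" using E XC by auto
  have FX: "\<forall>i<k. lam i \<cdot>\<^sub>m Fs i X \<in> carrier_mat b b" using Fs XC by auto
  have "(\<mu> \<cdot>\<^sub>m apply_right e a b E S) $$ (p, q) = (\<mu> \<cdot>\<^sub>m E X) $$ (p mod b, q mod b)"
    using p q P(5) Q(5) EX by (simp add: apply_right_def X_def[symmetric])
  also have "\<dots> = matsum b k (\<lambda>i. lam i \<cdot>\<^sub>m Fs i X) $$ (p mod b, q mod b)"
    using eq XC by simp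
  also have "\<dots> = (\<Sum>i<k. (lam i \<cdot>\<^sub>m Fs i X) $$ (p mod b, q mod b))"
    by (rule matsum_entry[OF FX P(5) Q(5)])
  also have "\<dots> = (\<Sum>i<k. (lam i \<cdot>\<^sub>m apply_right e a b (Fs i) S) $$ (p, q))"
  proof (rule sum.cong)
    fix i assume "i \<in> {..<k}"
    then have "Fs i X \<in> carrier_mat b b" using Fs XC by auto
    then show "(lam i \<cdot>\<^sub>m Fs i X) $$ (p mod b, q mod b) = (lam i \<cdot>\<^sub>m apply_right e a b (Fs i) S) $$ (p, q)"
      using p q P(5) Q(5) by (simp add: apply_right_def X_def[symmetric])
  qed simp
  also have "\<dots> = matsum (e * b) k (\<lambda>i. lam i \<cdot>\<^sub>m apply_right e a b (Fs i) S) $$ (p, q)"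
    by (rule matsum_entry[symmetric]) (use p q in \<open>auto simp: apply_right_def\<close>)
  finally show "(\<mu> \<cdot>\<^sub>m apply_right e a b E S) $$ (p, q) = matsum (e * b) k (\<lambda>i. lam i \<cdot>\<^sub>m apply_right e a b (Fs i) S) $$ (p, q)" .
qed

theorem proposition2:
  fixes star :: "nat \<Rightarrow> nat \<Rightarrow> qmap \<Rightarrow> cmat \<Rightarrow> cmat"
    and ext :: "nat \<Rightarrow> nat \<Rightarrow> nat \<Rightarrow> qmap \<Rightarrow> cmat \<Rightarrow> cmat"
  assumes "state_over_time star"
    and "axiomE star ext"
  shows "(axiomP star ext \<longleftrightarrow>
            (\<forall>a b E \<rho>. channel a b E \<and> density a \<rho> \<longrightarrow>
               star a b E \<rho> = apply_right a a b E (star a a id \<rho>)))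
       \<and> ((\<forall>a b E \<rho>. channel a b E \<and> density a \<rho> \<longrightarrow>
               star a b E \<rho> = apply_right a a b E (star a a id \<rho>)) \<longrightarrow>
            process_linear star \<and>
            (\<forall>a b \<rho> F G (\<alpha> :: complex) \<beta>. density a \<rho> \<and> linear_qmap a b F \<and> linear_qmap a b G \<longrightarrow>
               apply_right a a b (\<lambda>M. \<alpha> \<cdot>\<^sub>m F M + \<beta> \<cdot>\<^sub>m G M) (star a a id \<rho>)
                 = \<alpha> \<cdot>\<^sub>m apply_right a a b F (star a a id \<rho>) + \<beta> \<cdot>\<^sub>m apply_right a a b G (star a a id \<rho>)))"
  proof -
  have aE: "axiomE star ext" by (rule assms(2))
  define H where "H = (\<forall>a b E \<rho>. channel a b E \<and> density a \<rho> \<longrightarrow>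
               star a b E \<rho> = apply_right a a b E (star a a id \<rho>))"
  have carr: "\<forall>M\<in>carrier_mat a a. E M \<in> carrier_mat b b" if "channel a b E" for a b E
    using that by (simp add: channel_def linear_qmap_def)
  have extP: "ptrace_left a (b * e) (ext a b e F \<rho>) = apply_left a b e F \<rho>"
    if "channel a b F" "state_over_spacetime star a e \<rho>" for a b e F \<rho>
    using aE that unfolding axiomE_def by blast
  have d1: "H" if P: "axiomP star ext"
    unfolding H_def
  proof (intro allI impI)
    fix a b E \<rho> assume h: "channel a b E \<and> density a \<rho>"
    have "swap_sys b a (ptrace_left a (b * a) (ext a b a E (swap_sys a a (star a a id \<rho>)))) = star a b (E \<circ> id) \<rho>"
      using P h channel_id[of a] unfolding axiomP_def comp_id by (elim allE[of _ a] allE[of _ a] allE[of _ b] allE[of _ id] allE[of _ E] allE[of _ \<rho>]) (auto simp: comp_id)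
    moreover have "state_over_spacetime star a a (swap_sys a a (star a a id \<rho>))"
      unfolding state_over_spacetime_def using h channel_id[of a] by (intro disjI2) blast
    ultimately have "swap_sys b a (apply_left a b a E (swap_sys a a (star a a id \<rho>))) = star a b E \<rho>"
      using extP h by simp
    then show "star a b E \<rho> = apply_right a a b E (star a a id \<rho>)"
      by (simp add: swap_left_right)
  qed
  have d2: "axiomP star ext" if HH: "H"
    unfolding axiomP_def
  proof (intro allI impI)
    fix a b c E F \<rho> assume h: "channel a b E \<and> channel b c F \<and> density a \<rho>"
    have "state_over_spacetime star b a (swap_sys a b (star a b E \<rho>))"
      unfolding state_over_spacetime_def using h by (intro disjI2) blast
    then have "ptrace_left b (c * a) (ext b c a F (swap_sys a b (star a b E \<rho>)))
        = apply_left b c a F (swap_sys a b (star a b E \<rho>))"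
      using extP[of b c F a] h by blast
    moreover have "star a b E \<rho> = apply_right a a b E (star a a id \<rho>)" using HH h unfolding H_def by simp
    moreover have "star a c (F \<circ> E) \<rho> = apply_right a a c (F \<circ> E) (star a a id \<rho>)"
      using HH h channel_comp[of a b E c F] unfolding H_def by simp
    ultimately show "swap_sys c a (ptrace_left b (c * a) (ext b c a F (swap_sys a b (star a b E \<rho>)))) = star a c (F \<circ> E) \<rho>"
      using swap_comp[OF carr] h by simp
  qed
  have d3: "process_linear star" if HH: "H"
    unfolding process_linear_def
  proof (intro allI impI)
    fix a b \<rho> k and lam :: "nat \<Rightarrow> complex" and Fs \<mu> E
    assume h: "density a \<rho> \<and> channel a b E \<and> (\<forall>i<k. channel a b (Fs i)) \<and>
        (\<forall>M \<in> carrier_mat a a. \<mu> \<cdot>\<^sub>m E M = matsum b k (\<lambda>i. lam i \<cdot>\<^sub>m Fs i M))"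
    have "\<mu> \<cdot>\<^sub>m apply_right a a b E (star a a id \<rho>)
        = matsum (a * b) k (\<lambda>i. lam i \<cdot>\<^sub>m apply_right a a b (Fs i) (star a a id \<rho>))"
      by (rule apply_right_sum) (use h carr in auto)
    moreover have "star a b E \<rho> = apply_right a a b E (star a a id \<rho>)" using HH h unfolding H_def by simp
    moreover have "matsum (a * b) k (\<lambda>i. lam i \<cdot>\<^sub>m star a b (Fs i) \<rho>)
        = matsum (a * b) k (\<lambda>i. lam i \<cdot>\<^sub>m apply_right a a b (Fs i) (star a a id \<rho>))"
    proof -
      have "(\<lambda>i. lam i \<cdot>\<^sub>m star a b (Fs i) \<rho>) i = (\<lambda>i. lam i \<cdot>\<^sub>m apply_right a a b (Fs i) (star a a id \<rho>)) i"
        if "i < k" for i using HH h that unfolding H_def by simp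
      then show ?thesis unfolding matsum_def
        by (intro foldr_cong) auto
    qed
    ultimately show "\<mu> \<cdot>\<^sub>m star a b E \<rho> = matsum (a * b) k (\<lambda>i. lam i \<cdot>\<^sub>m star a b (Fs i) \<rho>)"
      by simp
  qed
  have d4: "\<forall>a b \<rho> F G (\<alpha> :: complex) \<beta>. density a \<rho> \<and> linear_qmap a b F \<and> linear_qmap a b G \<longrightarrow>
               apply_right a a b (\<lambda>M. \<alpha> \<cdot>\<^sub>m F M + \<beta> \<cdot>\<^sub>m G M) (star a a id \<rho>)
                 = \<alpha> \<cdot>\<^sub>m apply_right a a b F (star a a id \<rho>) + \<beta> \<cdot>\<^sub>m apply_right a a b G (star a a id \<rho>)"
    by (intro allI impI apply_right_lin) (auto simp: linear_qmap_def)
  have "axiomP star ext \<longleftrightarrow> H" using d1 d2 by blast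
  then show ?thesis using d3 d4 unfolding H_def by simp
qed

end
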